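(* Let $v$ be a Llull matrix on a finite set $A$ with path scores $v^*$, and let $x,y,z\in A$ be pairwise distinct. If $v^*_{yz}>v^*_{xz}$, then $v^*_{xz}\ge v^*_{xy}$. If $v^*_{xy}>v^*_{xz}$, then $v^*_{xz}\ge v^*_{yz}$.
   Context: A Llull matrix on $A$ is a family of real numbers $v_{xy}\in[0,1]$, indexed by ordered pairs $(x,y)$ of distinct elements of $A$, with $v_{xy}+v_{yx}\le1$. The path scores are $v^*_{xy}=\max\min(v_{x_0x_1},\dots,v_{x_{m-1}x_m})$, the maximum over all paths $x_0x_1\dots x_m$ with $m\ge1$, $x_0=x$, $x_m=y$ and the $x_i$ pairwise distinct. *)

theory Defs
  imports Complex_Main
begin

definition llull_matrix :: "'a set \<Rightarrow> ('a \<Rightarrow> 'a \<Rightarrow> real) \<Rightarrow> bool" where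
  "llull_matrix A v \<longleftrightarrow>
     (\<forall>x\<in>A. \<forall>y\<in>A. x \<noteq> y \<longrightarrow> 0 \<le> v x y \<and> v x y \<le> 1 \<and> v x y + v y x \<le> 1)"

definition llull_paths :: "'a set \<Rightarrow> 'a \<Rightarrow> 'a \<Rightarrow> 'a list set" where
  "llull_paths A x y =
     {p. distinct p \<and> set p \<subseteq> A \<and> 2 \<le> length p \<and> hd p = x \<and> last p = y}"

definition path_min :: "('a \<Rightarrow> 'a \<Rightarrow> real) \<Rightarrow> 'a list \<Rightarrow> real" where
  "path_min v p = Min (set (map (\<lambda>(a, b). v a b) (zip p (tl p))))"

definition path_score :: "'a set \<Rightarrow> ('a \<Rightarrow> 'a \<Rightarrow> real) \<Rightarrow> 'a \<Rightarrow> 'a \<Rightarrow> real" where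
  "path_score A v x y = Max (path_min v ` llull_paths A x y)"

end

theory Submission
  imports Defs "HOL-Library.Transitive_Closure_Table"
begin

lemma chain_iff:
  "rtrancl_path r a xs b \<longleftrightarrow> (\<forall>(c,d)\<in>set (zip (a#xs) xs). r c d) \<and> b = last (a#xs)"
proof (induction xs arbitrary: a)
  case Nil
  then show ?case by (auto elim: rtrancl_path.cases intro: rtrancl_path.base)
next
  case (Cons y ys)
  have "rtrancl_path r a (y#ys) b \<longleftrightarrow> r a y \<and> rtrancl_path r y ys b"
    by (auto elim: rtrancl_path.cases intro: rtrancl_path.step)
  then show ?case using Cons by auto
qed

lemma zip_tl_mem: "(c,d) \<in> set (zip p (tl p)) \<Longrightarrow> c \<in> set p \<and> d \<in> set p"
  by (cases p) (auto dest: set_zip_leftD set_zip_rightD)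

lemma paths_finite: "finite A \<Longrightarrow> finite (llull_paths A x y)"
  by (rule finite_subset[OF _ finite_subset_distinct[of A]]) (auto simp: llull_paths_def)

lemma paths_ne: "x \<in> A \<Longrightarrow> y \<in> A \<Longrightarrow> x \<noteq> y \<Longrightarrow> [x,y] \<in> llull_paths A x y"
  by (auto simp: llull_paths_def)

lemma score_ge: "finite A \<Longrightarrow> p \<in> llull_paths A x y \<Longrightarrow> path_min v p \<le> path_score A v x y"
  unfolding path_score_def by (auto intro: Max_ge paths_finite)

lemma score_attained: "finite A \<Longrightarrow> x \<in> A \<Longrightarrow> y \<in> A \<Longrightarrow> x \<noteq> y \<Longrightarrow>
   \<exists>p\<in>llull_paths A x y. path_min v p = path_score A v x y"
  unfolding path_score_def
  using Max_in[of "path_min v ` llull_paths A x y"] paths_finite paths_ne by fastforce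

lemma path_min_ge:
  assumes "2 \<le> length p"
  shows "t \<le> path_min v p \<longleftrightarrow> (\<forall>(c,d)\<in>set (zip p (tl p)). t \<le> v c d)"
proof -
  obtain a b rest where p: "p = a # b # rest" using assms
    by (metis One_nat_def Suc_1 Suc_le_length_iff)
  show ?thesis unfolding path_min_def
    by (subst Min_ge_iff) (auto simp: p)
qed

lemma ultra:
  assumes "finite A" "x \<in> A" "y \<in> A" "z \<in> A" "x \<noteq> y" "y \<noteq> z" "x \<noteq> z"
  shows "min (path_score A v x y) (path_score A v y z) \<le> path_score A v x z"
proof -
  define t where "t = min (path_score A v x y) (path_score A v y z)"
  define r where "r = (\<lambda>a b. a \<in> A \<and> b \<in> A \<and> t \<le> v a b)"
  obtain p where p: "p \<in> llull_paths A x y" "path_min v p = path_score A v x y"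
    using score_attained assms by metis
  obtain q where q: "q \<in> llull_paths A y z" "path_min v q = path_score A v y z"
    using score_attained assms by metis
  obtain ps where ps: "p = x # ps" using p(1) unfolding llull_paths_def
    by (cases p) auto
  obtain qs where qs: "q = y # qs" using q(1) unfolding llull_paths_def
    by (cases q) auto
  have pA: "set p \<subseteq> A" "2 \<le> length p" "last p = y" using p(1) by (auto simp: llull_paths_def)
  have qA: "set q \<subseteq> A" "2 \<le> length q" "last q = z" using q(1) by (auto simp: llull_paths_def)
  have "\<forall>(c,d)\<in>set (zip p (tl p)). t \<le> v c d"
    using path_min_ge[OF pA(2), of t v] p(2) t_def by auto
  moreover have "\<forall>(c,d)\<in>set (zip p (tl p)). c \<in> A \<and> d \<in> A"
    using pA(1) by (auto dest!: zip_tl_mem)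
  ultimately have "rtrancl_path r x ps y"
    unfolding chain_iff r_def using ps pA(3) by auto
  have "\<forall>(c,d)\<in>set (zip q (tl q)). t \<le> v c d"
    using path_min_ge[OF qA(2), of t v] q(2) t_def by auto
  moreover have "\<forall>(c,d)\<in>set (zip q (tl q)). c \<in> A \<and> d \<in> A"
    using qA(1) by (auto dest!: zip_tl_mem)
  ultimately have "rtrancl_path r y qs z"
    unfolding chain_iff r_def using qs qA(3) by auto
  have "rtrancl_path r x (ps @ qs) z"
    by (rule rtrancl_path_trans) fact+
  then obtain xs where xs: "rtrancl_path r x xs z" "distinct (x # xs)" "set xs \<subseteq> set (ps @ qs)"
    by (rule rtrancl_path_distinct)
  have "xs \<noteq> []" using xs(1) assms(7) by (auto elim: rtrancl_path.cases)
  have ch: "\<forall>(c,d)\<in>set (zip (x#xs) xs). r c d" "z = last (x#xs)"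
    using xs(1) unfolding chain_iff by auto
  have "x # xs \<in> llull_paths A x z"
    unfolding llull_paths_def using xs(2,3) \<open>xs \<noteq> []\<close> ch(2) pA(1) qA(1) ps qs assms(2)
    by (auto simp: Suc_le_eq)
  moreover have "t \<le> path_min v (x # xs)"
    using path_min_ge[of "x#xs" t v] \<open>xs \<noteq> []\<close> ch(1) unfolding r_def
    by (cases xs) auto
  ultimately show ?thesis proof -
    assume a: "x # xs \<in> llull_paths A x z" "t \<le> path_min v (x # xs)"
    have "path_min v (x#xs) \<le> path_score A v x z" by (rule score_ge[OF assms(1) a(1)])
    with a(2) show ?thesis unfolding t_def by (rule order_trans)
  qed
qed

theorem lemma2p6:
  fixes A :: "'a set" and v :: "'a \<Rightarrow> 'a \<Rightarrow> real" and x y z :: 'a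
  assumes "finite A" and "llull_matrix A v"
    and "x \<in> A" and "y \<in> A" and "z \<in> A"
    and "x \<noteq> y" and "y \<noteq> z" and "x \<noteq> z"
  shows "(path_score A v y z > path_score A v x z \<longrightarrow> path_score A v x z \<ge> path_score A v x y)
       \<and> (path_score A v x y > path_score A v x z \<longrightarrow> path_score A v x z \<ge> path_score A v y z)"
  proof -
  have "min (path_score A v x y) (path_score A v y z) \<le> path_score A v x z"
    by (rule ultra[OF assms(1,3,4,5,6,7,8)])
  then show ?thesis by (auto simp: min_def split: if_splits)
qed

end
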